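(* Assume the setup described in the context, with $\lambda_d$ defined as there. Then $|\lambda_d|\ll(\log X)^{k/2}$ for all $d$.
   Context: Let $X$ be sufficiently large and $k\le(\log X)^{1/5}$. Let $p_0\in[(\log\log X)/2,X]$ be a prime such that for every $\epsilon>0$, $\sum_{q<X^{1/2-\epsilon},(q,p_0)=1}\sup_{(a,q)=1,\,x'\le X}|\pi(x';q,a)-\pi(x')/\phi(q)|\ll_\epsilon X\exp(-c_0\sqrt{\log X})$ for an absolute $c_0>0$. Let $\mathcal{L}=\{L_1,\dots,L_k\}$ be distinct linear functions $L_i(n)=a_in+b_i$ with integer coefficients $0<a_i\le(\log X)^{1/3}$, $\gcd(2p_0,a_i)=1$, $0<b_i<X$, which are $\langle P_3\rangle$-admissible: for every prime $p\equiv3\pmod4$ there is $n_p$ with $p\nmid\prod_iL_i(n_p)$. Let $\langle P_3\rangle$ be the set of positive integers all of whose prime factors are $\equiv3\pmod4$. Let $W=\prod_{p\le2(\log X)^{1/3},\,p\equiv3\ (4),\,p\ne p_0}p$. For primes $p$ let $\nu(p)=\#\{1\le n<p:\prod_{i=1}^kL_i(n)\equiv0\pmod p\}$. For $r\ge1$ let $y_r=\mu(r)^2$ if $r\in\langle P_3\rangle$, $\gcd(r,Wp_0)=1$ and $r<X^{1/10}$, and $y_r=0$ otherwise. For $d$ with $\gcd(d,p_0W)=1$ let $\lambda_d=\mu(d)\bigl(\prod_{p\mid d}\frac{p}{\nu(p)}\bigr)\sum_{r:\,d\mid r}y_r\prod_{p\mid r}\frac{\nu(p)}{p-\nu(p)}$,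 and $\lambda_d=0$ otherwise. *)

theory Defs
  imports "HOL-Analysis.Analysis" "HOL-Number_Theory.Number_Theory"
    "HOL-Computational_Algebra.Squarefree"
begin

definition moeb :: "nat \<Rightarrow> int" where
  "moeb n = (if n > 0 \<and> squarefree n then (-1) ^ card (prime_factors n) else 0)"

definition prime_pi :: "real \<Rightarrow> nat" where
  "prime_pi x = card {p::nat. prime p \<and> real p \<le> x}"

definition prime_pi_ap :: "real \<Rightarrow> nat \<Rightarrow> nat \<Rightarrow> nat" where
  "prime_pi_ap x q a = card {p::nat. prime p \<and> real p \<le> x \<and> [p = a] (mod q)}"

definition P3 :: "nat set" where
  "P3 = {n. n > 0 \<and> (\<forall>p\<in>prime_factors n. p mod 4 = 3)}"

definition prodL :: "nat \<Rightarrow> (nat \<Rightarrow> int) \<Rightarrow> (nat \<Rightarrow> int) \<Rightarrow> int \<Rightarrow> int" where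
  "prodL k a b n = (\<Prod>i<k. a i * n + b i)"

definition nuL :: "nat \<Rightarrow> (nat \<Rightarrow> int) \<Rightarrow> (nat \<Rightarrow> int) \<Rightarrow> nat \<Rightarrow> nat" where
  "nuL k a b p = card {n::nat. 1 \<le> n \<and> n < p \<and> int p dvd prodL k a b (int n)}"

definition Wprod :: "real \<Rightarrow> nat \<Rightarrow> nat" where
  "Wprod X p0 = (\<Prod>p\<in>{p::nat. prime p \<and> real p \<le> 2 * ln X powr (1/3) \<and> p mod 4 = 3 \<and> p \<noteq> p0}. p)"

definition yr :: "real \<Rightarrow> nat \<Rightarrow> nat \<Rightarrow> real" where
  "yr X p0 r = (if r \<in> P3 \<and> squarefree r \<and> coprime r (Wprod X p0 * p0) \<and> real r < X powr (1/10)
                then 1 else 0)"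

definition lambdaL :: "real \<Rightarrow> nat \<Rightarrow> nat \<Rightarrow> (nat \<Rightarrow> int) \<Rightarrow> (nat \<Rightarrow> int) \<Rightarrow> nat \<Rightarrow> real" where
  "lambdaL X p0 k a b d =
     (if coprime d (p0 * Wprod X p0) then
        real_of_int (moeb d) * (\<Prod>p\<in>prime_factors d. real p / real (nuL k a b p)) *
        (\<Sum>r\<in>{r::nat. 0 < r \<and> d dvd r \<and> real r < X powr (1/10)}.
            yr X p0 r * (\<Prod>p\<in>prime_factors r. real (nuL k a b p) / (real p - real (nuL k a b p))))
      else 0)"

end

theory Submission
  imports Defs
begin

lemma sum_divisors_swap:
  fixes F :: "nat \<Rightarrow> nat \<Rightarrow> real"
  shows "(\<Sum>n=1..N. \<Sum>d | d dvd n. F d (n div d)) = (\<Sum>d=1..N. \<Sum>m=1..N div d. F d m)"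
proof -
  have "(\<Sum>n=1..N. \<Sum>d | d dvd n. F d (n div d)) = (\<Sum>(n,d)\<in>Sigma {1..N} (\<lambda>n. {d. d dvd n}). F d (n div d))"
    by (rule sum.Sigma) (auto intro: finite_divisors_nat)
  also have "\<dots> = (\<Sum>(d,m)\<in>Sigma {1..N} (\<lambda>d. {1..N div d}). F d m)"
  proof (rule sum.reindex_bij_witness[where i="\<lambda>(d,m). (d*m, d)" and j="\<lambda>(n,d). (d, n div d)"], goal_cases)
    case (1 a) then show ?case by (auto simp: dvd_def)
  next
    case (2 b)
    then obtain n d where b: "b = (n,d)" "1 \<le> n" "n \<le> N" "d dvd n" by auto
    then obtain e where e: "n = d * e" by (auto simp: dvd_def)
    have "d \<ge> 1" "e \<ge> 1" using b e by (auto simp: Suc_le_eq)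
    have "d \<le> n" using b by (simp add: dvd_imp_le)
    moreover have "n div d = e" using e \<open>d \<ge> 1\<close> by simp
    moreover have "e \<le> N div d" using b e \<open>d \<ge> 1\<close> by (simp add: less_eq_div_iff_mult_less_eq mult.commute)
    ultimately show ?case using b \<open>d \<ge> 1\<close> \<open>e \<ge> 1\<close> by simp
  next
    case (3 b) then show ?case by auto
  next
    case (4 a)
    then obtain d m where a: "a = (d,m)" "1 \<le> d" "d \<le> N" "1 \<le> m" "m \<le> N div d" by auto
    have "m * d \<le> N" using a(2,5) by (simp add: less_eq_div_iff_mult_less_eq)
    moreover have "1 \<le> d * m" using a by simp
    ultimately show ?case using a by (simp add: mult.commute)
  next
    case (5 a) then show ?case by (auto simp: dvd_def)
  qed
  also have "\<dots> = (\<Sum>d=1..N. \<Sum>m=1..N div d. F d m)"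
    by (rule sum.Sigma[symmetric]) auto
  finally show ?thesis .
qed

definition psi :: "nat \<Rightarrow> real" where "psi N = (\<Sum>d=1..N. mangoldt d)"

lemma ln_fact_sum: "ln (fact N :: real) = (\<Sum>n=1..N. ln (real n))"
proof (induction N)
  case 0 then show ?case by simp
next
  case (Suc N)
  have "ln (fact (Suc N) :: real) = ln (real (Suc N)) + ln (fact N)"
    by (simp add: ln_mult del: of_nat_Suc)
  then show ?case using Suc by (simp add: add.commute del: of_nat_Suc)
qed

lemma ln_fact_mangoldt: "ln (fact N :: real) = (\<Sum>d=1..N. mangoldt d * real (N div d))"
proof -
  have "ln (fact N :: real) = (\<Sum>n=1..N. \<Sum>d | d dvd n. mangoldt d)"
    unfolding ln_fact_sum by (intro sum.cong refl) (subst mangoldt_sum, auto)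
  also have "\<dots> = (\<Sum>d=1..N. \<Sum>m=1..N div d. mangoldt d)"
    using sum_divisors_swap[of "\<lambda>d m. mangoldt d" N] by simp
  also have "\<dots> = (\<Sum>d=1..N. mangoldt d * real (N div d))" by (simp add: mult.commute)
  finally show ?thesis .
qed

lemma psi_nonneg: "psi N \<ge> 0"
  unfolding psi_def by (intro sum_nonneg mangoldt_nonneg)

lemma psi_mono: "M \<le> N \<Longrightarrow> psi M \<le> psi N"
  unfolding psi_def by (intro sum_mono2) (auto intro: mangoldt_nonneg)

lemma psi_double: "psi (2*n) - psi n \<le> 2 * real n * ln 2"
proof -
  have split: "psi (2*n) = psi n + (\<Sum>d=n+1..2*n. mangoldt d)"
    unfolding psi_def using sum.ub_add_nat[of 1 n mangoldt n] by (simp add: mult_2)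
  have ext: "(\<Sum>d=1..n. mangoldt d * real (n div d)) = (\<Sum>d=1..2*n. mangoldt d * real (n div d))"
    by (rule sum.mono_neutral_left) auto
  have "ln (real ((2*n) choose n)) = ln (fact (2*n)) - 2 * ln (fact n :: real)"
  proof -
    have "real ((2*n) choose n) = fact (2*n) / (fact n * fact n)"
      using binomial_fact[of n "2*n", where 'a=real] by (simp add: mult_2)
    then show ?thesis by (simp add: ln_div ln_mult)
  qed
  also have "\<dots> = (\<Sum>d=1..2*n. mangoldt d * (real ((2*n) div d) - 2 * real (n div d)))"
    unfolding ln_fact_mangoldt ext by (simp add: sum_subtractf sum_distrib_left algebra_simps)
  also have "\<dots> \<ge> (\<Sum>d=1..2*n. if d > n then mangoldt d else 0)"
  proof (rule sum_mono)
    fix d assume d: "d \<in> {1..2*n}"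
    have a: "2 * (n div d) \<le> (2*n) div d"
    proof -
      have "2 * (n div d) * d \<le> 2*n" using div_times_less_eq_dividend[of n d] by (simp add: mult.assoc)
      then show ?thesis using d by (simp add: less_eq_div_iff_mult_less_eq)
    qed
    show "(if d > n then mangoldt d else 0) \<le> mangoldt d * (real ((2*n) div d) - 2 * real (n div d))"
    proof (cases "d > n")
      case True
      then have "n div d = 0" by simp
      moreover have "(2*n) div d \<ge> 1" using True d by (simp add: less_eq_div_iff_mult_less_eq)
      then have "mangoldt d * 1 \<le> mangoldt d * real ((2*n) div d)"
        by (intro mult_left_mono mangoldt_nonneg) simp
      with \<open>n div d = 0\<close> show ?thesis using True by simp
    next
      case False
      have "real (2 * (n div d)) \<le> real ((2*n) div d)" using a by linarith
      then show ?thesis using False by (simp add: mangoldt_nonneg)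
    qed
  qed
  finally have "(\<Sum>d=1..2*n. if d > n then mangoldt d else 0) \<le> ln (real ((2*n) choose n))" .
  moreover have "(\<Sum>d=1..2*n. if d > n then mangoldt d else 0) = (\<Sum>d=n+1..2*n. mangoldt d :: real)"
    by (rule sum.mono_neutral_cong_right) auto
  moreover have "ln (real ((2*n) choose n)) \<le> 2 * real n * ln 2"
  proof -
    have "real ((2*n) choose n) \<le> 2 ^ (2*n)"
      using binomial_le_pow2[of "2*n" n] by (metis of_nat_le_iff of_nat_numeral of_nat_power)
    moreover have "real ((2*n) choose n) > 0" by simp
    ultimately have "ln (real ((2*n) choose n)) \<le> ln (2 ^ (2*n))" by simp
    also have "\<dots> = 2 * real n * ln 2" by (simp add: ln_realpow)
    finally show ?thesis .
  qed
  ultimately show ?thesis using split by linarith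
qed

lemma psi_le: "psi N \<le> 4 * real N"
proof (induction N rule: less_induct)
  case (less N)
  consider "N = 0" | "N = 1" | n where "N = 2*n" "n \<ge> 1" | n where "N = 2*n+1" "n \<ge> 1"
  proof -
    have "\<exists>n. N = 2*n \<or> N = 2*n+1" by presburger
    then obtain n where "N = 2*n \<or> N = 2*n+1" by blast
    then show ?thesis using that by (cases "n = 0") auto
  qed
  then show ?case
  proof cases
    case 1 then show ?thesis by (simp add: psi_def)
  next
    case 2 then show ?thesis by (simp add: psi_def)
  next
    case (3 n)
    have "n < N" using 3 by simp
    then have "psi n \<le> 4 * real n" using less.IH by blast
    moreover have "2 * real n * ln 2 \<le> 2 * real n" using mult_left_mono[of "ln 2" 1 "2 * real n"] ln_2_less_1 by simp
    ultimately have "psi (2*n) \<le> 6 * real n" using psi_double[of n] by linarith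
    then show ?thesis using 3 by simp
  next
    case (4 n)
    have "n + 1 < N" using 4 by simp
    then have "psi (n+1) \<le> 4 * real (n+1)" using less.IH by blast
    moreover have "psi N \<le> psi (2*(n+1))" using 4 by (intro psi_mono) simp
    moreover have "psi (2*(n+1)) - psi (n+1) \<le> 2 * real (n+1) * ln 2" by (rule psi_double)
    moreover have "2 * real (n+1) * ln 2 \<le> 2 * real (n+1)" using mult_left_mono[of "ln 2" 1 "2 * real (n+1)"] ln_2_less_1 by simp
    ultimately have "psi N \<le> 6 * real (n+1)" by linarith
    then show ?thesis using 4 by simp
  qed
qed

lemma mertens_upper:
  assumes "N \<ge> 1"
  shows "(\<Sum>d=1..N. mangoldt d / real d) \<le> ln (real N) + 4"
proof -
  have "real N * (\<Sum>d=1..N. mangoldt d / real d) - psi N = (\<Sum>d=1..N. mangoldt d * (real N / real d - 1))"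
    unfolding psi_def by (simp add: sum_distrib_left sum_subtractf algebra_simps)
  also have "\<dots> \<le> (\<Sum>d=1..N. mangoldt d * real (N div d))"
  proof (rule sum_mono)
    fix d assume d: "d \<in> {1..N}"
    have "real N = real (N div d) * real d + real (N mod d)"
      by (metis div_mult_mod_eq of_nat_add of_nat_mult)
    moreover have "real (N mod d) < real d" using d by simp
    ultimately have "real N / real d - 1 \<le> real (N div d)" using d
      by (simp add: field_simps)
    then show "mangoldt d * (real N / real d - 1) \<le> mangoldt d * real (N div d)"
      by (intro mult_left_mono mangoldt_nonneg)
  qed
  also have "\<dots> = ln (fact N)" by (simp add: ln_fact_mangoldt)
  also have "\<dots> \<le> ln (real N ^ N)"
    using fact_le_power[of N, where 'a=real] assms by (subst ln_le_cancel_iff) auto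
  also have "\<dots> = real N * ln (real N)" by (simp add: ln_realpow)
  finally have "real N * (\<Sum>d=1..N. mangoldt d / real d) \<le> real N * ln (real N) + psi N" by simp
  also have "\<dots> \<le> real N * ln (real N) + real N * 4" using psi_le[of N] by simp
  finally have "real N * (\<Sum>d=1..N. mangoldt d / real d) \<le> real N * (ln (real N) + 4)"
    by (simp add: algebra_simps)
  then show ?thesis using assms by (simp add: mult_le_cancel_left_pos)
qed

definition chi4 :: "nat \<Rightarrow> real" where
  "chi4 n = (if n mod 4 = 1 then 1 else if n mod 4 = 3 then -1 else 0)"

lemma chi4_mult: "chi4 (m*n) = chi4 m * chi4 n"
proof -
  have m: "m mod 4 \<in> {0,1,2,3}" and n: "n mod 4 \<in> {0,1,2,3}" by auto
  have e: "(m*n) mod 4 = ((m mod 4) * (n mod 4)) mod 4" by (simp add: mod_mult_eq)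
  show ?thesis unfolding chi4_def e using m n by auto
qed

lemma chi4_abs: "\<bar>chi4 n\<bar> \<le> 1"
  unfolding chi4_def by auto

lemma chi4_partial: "(\<Sum>m=1..n. chi4 m) = (if n mod 4 = 1 \<or> n mod 4 = 2 then 1 else 0)"
proof (induction n)
  case 0 then show ?case by simp
next
  case (Suc n)
  have e: "(\<Sum>m=1..Suc n. chi4 m) = (\<Sum>m=1..n. chi4 m) + chi4 (Suc n)" by simp
  have "n mod 4 = 0 \<or> n mod 4 = 1 \<or> n mod 4 = 2 \<or> n mod 4 = 3" by auto
  then show ?case
  proof (elim disjE)
    assume h: "n mod 4 = 0"
    then have "Suc n mod 4 = 1" by (simp add: mod_Suc)
    then show ?thesis using Suc h e by (simp add: chi4_def)
  next
    assume h: "n mod 4 = 1"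
    then have "Suc n mod 4 = 2" by (simp add: mod_Suc)
    then show ?thesis using Suc h e by (simp add: chi4_def)
  next
    assume h: "n mod 4 = 2"
    then have "Suc n mod 4 = 3" by (simp add: mod_Suc)
    then show ?thesis using Suc h e by (simp add: chi4_def)
  next
    assume h: "n mod 4 = 3"
    then have "Suc n mod 4 = 0" by (simp add: mod_Suc)
    then show ?thesis using Suc h e by (simp add: chi4_def)
  qed
qed

lemma chi4_partial_bounds: "0 \<le> (\<Sum>m=1..n. chi4 m)" "(\<Sum>m=1..n. chi4 m) \<le> 1"
  unfolding chi4_partial by auto

lemma alt_sum_main:
  fixes f c :: "nat \<Rightarrow> real"
  assumes mono: "\<And>n. a \<le> n \<Longrightarrow> f (Suc n) \<le> f n"
    and X0: "\<And>n. 0 \<le> (\<Sum>m=1..n. c m)" and X1: "\<And>n. (\<Sum>m=1..n. c m) \<le> 1"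
    and a: "1 \<le> a" and ab: "a \<le> b"
  shows "0 \<le> (\<Sum>n=a..b. c n * f n) - (\<Sum>m=1..b. c m) * f b + (\<Sum>m=1..a-1. c m) * f a
         \<and> (\<Sum>n=a..b. c n * f n) - (\<Sum>m=1..b. c m) * f b + (\<Sum>m=1..a-1. c m) * f a \<le> f a - f b"
  using ab
proof (induction b rule: dec_induct)
  case base
  have "(\<Sum>m=1..a. c m) = (\<Sum>m=1..a-1. c m) + c a"
    using a by (cases a) auto
  then show ?case by (simp add: algebra_simps)
next
  case (step n)
  define V where "V = (\<Sum>n=a..n. c n * f n) - (\<Sum>m=1..n. c m) * f n + (\<Sum>m=1..a-1. c m) * f a"
  have eq: "(\<Sum>n=a..Suc n. c n * f n) - (\<Sum>m=1..Suc n. c m) * f (Suc n) + (\<Sum>m=1..a-1. c m) * f a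
        = V + (\<Sum>m=1..n. c m) * (f n - f (Suc n))"
    using step(1) unfolding V_def by (simp add: algebra_simps)
  have d: "0 \<le> f n - f (Suc n)" using mono step(1) by simp
  have "0 \<le> (\<Sum>m=1..n. c m) * (f n - f (Suc n))" using X0 d by simp
  moreover have "(\<Sum>m=1..n. c m) * (f n - f (Suc n)) \<le> 1 * (f n - f (Suc n))"
    using X1 d by (intro mult_right_mono) auto
  ultimately show ?case using step(3) unfolding eq V_def[symmetric] by simp
qed

lemma alt_sum_abs:
  fixes f c :: "nat \<Rightarrow> real"
  assumes mono: "\<And>n. a \<le> n \<Longrightarrow> f (Suc n) \<le> f n" and pos: "\<And>n. a \<le> n \<Longrightarrow> 0 \<le> f n"
    and X0: "\<And>n. 0 \<le> (\<Sum>m=1..n. c m)" and X1: "\<And>n. (\<Sum>m=1..n. c m) \<le> 1"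
    and a: "1 \<le> a"
  shows "\<bar>\<Sum>n=a..b. c n * f n\<bar> \<le> f a"
proof (cases "a \<le> b")
  case False then show ?thesis using pos[of a] by simp
next
  case True
  note m = alt_sum_main[where a=a and f=f and c=c and b=b, OF mono X0 X1 a True]
  have fb: "0 \<le> f b" using pos True by simp
  have A: "0 \<le> (\<Sum>m=1..b. c m) * f b" "(\<Sum>m=1..b. c m) * f b \<le> f b"
    using X0[of b] X1[of b] fb by (auto intro: mult_left_le_one_le)
  have B: "0 \<le> (\<Sum>m=1..a-1. c m) * f a" "(\<Sum>m=1..a-1. c m) * f a \<le> f a"
    using X0[of "a-1"] X1[of "a-1"] pos[of a] by (auto intro: mult_left_le_one_le)
  show ?thesis using m A B by linarith
qed

lemma sum_split_nat:
  fixes g :: "nat \<Rightarrow> real"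
  assumes "M \<le> M'"
  shows "(\<Sum>m=1..M'. g m) = (\<Sum>m=1..M. g m) + (\<Sum>m=M+1..M'. g m)"
  using sum.ub_add_nat[of 1 M g "M'-M"] assms by simp

definition S4 :: "nat \<Rightarrow> real" where "S4 M = (\<Sum>m=1..M. chi4 m / real m)"

lemma S4_diff:
  assumes "M \<le> M'"
  shows "\<bar>S4 M' - S4 M\<bar> \<le> 1 / real (M+1)"
proof -
  have "S4 M' - S4 M = (\<Sum>m=M+1..M'. chi4 m * (1 / real m))"
    unfolding S4_def using sum_split_nat[OF assms, of "\<lambda>m. chi4 m / real m"] by simp
  also have "\<bar>\<dots>\<bar> \<le> 1 / real (M+1)"
    by (rule alt_sum_abs[where f="\<lambda>m. 1 / real m", OF _ _ chi4_partial_bounds(1) chi4_partial_bounds(2)])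
       (auto simp: frac_le)
  finally show ?thesis .
qed

lemma S4_lower:
  assumes "M \<ge> 1"
  shows "S4 M \<ge> 2/3"
proof (cases "M \<ge> 3")
  case False
  then have "M = 1 \<or> M = 2" using assms by auto
  moreover have "{1..2::nat} = {1,2}" by auto
  ultimately show ?thesis by (auto simp: S4_def chi4_def)
next
  case True
  have "S4 M = S4 2 + (\<Sum>m=3..M. chi4 m * (1 / real m))"
    unfolding S4_def using sum_split_nat[of 2 M "\<lambda>m. chi4 m / real m"] True by simp
  moreover have "S4 2 = 1"
  proof -
    have "{1..2::nat} = {1,2}" by auto
    then show ?thesis by (simp add: S4_def chi4_def)
  qed
  moreover have "\<bar>\<Sum>m=3..M. chi4 m * (1 / real m)\<bar> \<le> 1 / real (3::nat)"
    by (rule alt_sum_abs[where f="\<lambda>m. 1 / real m", OF _ _ chi4_partial_bounds(1) chi4_partial_bounds(2)])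
       (auto simp: frac_le)
  ultimately show ?thesis by simp
qed

lemma log_chi_sum: "\<bar>\<Sum>n=1..N. chi4 n * (ln (real n) / real n)\<bar> \<le> 1"
proof (cases "N \<ge> 3")
  case False
  then have "N = 0 \<or> N = 1 \<or> N = 2" by auto
  moreover have "{1..2::nat} = {1,2}" by auto
  ultimately show ?thesis by (auto simp: chi4_def)
next
  case True
  have "(\<Sum>n=1..N. chi4 n * (ln (real n) / real n)) =
        (\<Sum>n=1..2. chi4 n * (ln (real n) / real n)) + (\<Sum>n=3..N. chi4 n * (ln (real n) / real n))"
    using sum_split_nat[of 2 N] True by simp
  moreover have "(\<Sum>n=1..2. chi4 n * (ln (real n) / real n)) = 0"
  proof -
    have "{1..2::nat} = {1,2}" by auto
    then show ?thesis by (simp add: chi4_def)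
  qed
  moreover have "\<bar>\<Sum>n=3..N. chi4 n * (ln (real n) / real n)\<bar> \<le> ln (real (3::nat)) / real (3::nat)"
  proof (rule alt_sum_abs[where f="\<lambda>n. ln (real n) / real n", OF _ _ chi4_partial_bounds(1) chi4_partial_bounds(2)])
    fix n :: nat assume "3 \<le> n"
    then have "exp 1 \<le> real n" using exp_le by linarith
    then show "ln (real (Suc n)) / real (Suc n) \<le> ln (real n) / real n"
      by (intro ln_x_over_x_mono) auto
  next
    fix n :: nat assume "3 \<le> n"
    then show "0 \<le> ln (real n) / real n" by simp
  qed simp
  moreover have "ln (real (3::nat)) / real (3::nat) \<le> 1"
  proof -
    have "ln (3::real) \<le> 3 - 1" by (rule ln_le_minus_one) simp
    then show ?thesis by simp
  qed
  ultimately show ?thesis by linarith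
qed

lemma chi4_div_split:
  assumes "d dvd n" "n \<ge> 1"
  shows "chi4 n / real n = chi4 d / real d * (chi4 (n div d) / real (n div d))"
proof -
  from assms obtain e where e: "n = d * e" by (auto simp: dvd_def)
  have "d \<noteq> 0" using e assms by auto
  then have "n div d = e" using e by simp
  then show ?thesis using e by (simp add: chi4_mult)
qed

lemma T_bound: "\<bar>\<Sum>d=1..N. chi4 d * mangoldt d / real d\<bar> \<le> 8"
proof (cases "N = 0")
  case True then show ?thesis by simp
next
  case False
  then have N1: "N \<ge> 1" by simp
  define T where "T = (\<Sum>d=1..N. chi4 d * mangoldt d / real d)"
  define F where "F = (\<lambda>d m. mangoldt d * chi4 d / real d * (chi4 m / real m))"
  have "(\<Sum>n=1..N. chi4 n * (ln (real n) / real n)) = (\<Sum>n=1..N. \<Sum>d | d dvd n. F d (n div d))"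
  proof (intro sum.cong refl)
    fix n assume n: "n \<in> {1..N}"
    have "chi4 n * (ln (real n) / real n) = (\<Sum>d | d dvd n. mangoldt d) * (chi4 n / real n)"
      using n by (subst mangoldt_sum) auto
    also have "\<dots> = (\<Sum>d | d dvd n. mangoldt d * (chi4 n / real n))" by (rule sum_distrib_right)
    also have "\<dots> = (\<Sum>d | d dvd n. F d (n div d))"
      using n by (intro sum.cong refl) (auto simp: F_def chi4_div_split)
    finally show "chi4 n * (ln (real n) / real n) = (\<Sum>d | d dvd n. F d (n div d))" .
  qed
  also have "\<dots> = (\<Sum>d=1..N. \<Sum>m=1..N div d. F d m)" by (rule sum_divisors_swap)
  also have "\<dots> = (\<Sum>d=1..N. mangoldt d * chi4 d / real d * S4 (N div d))"
    unfolding F_def S4_def by (simp add: sum_distrib_left)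
  also have "\<dots> = (\<Sum>d=1..N. S4 N * (chi4 d * mangoldt d / real d) + mangoldt d * chi4 d / real d * (S4 (N div d) - S4 N))"
    by (intro sum.cong refl) (simp add: field_simps)
  also have "\<dots> = S4 N * T + (\<Sum>d=1..N. mangoldt d * chi4 d / real d * (S4 (N div d) - S4 N))"
    unfolding T_def by (simp only: sum.distrib sum_distrib_left)
  finally have eq: "S4 N * T = (\<Sum>n=1..N. chi4 n * (ln (real n) / real n)) -
      (\<Sum>d=1..N. mangoldt d * chi4 d / real d * (S4 (N div d) - S4 N))" by simp
  have "\<bar>\<Sum>d=1..N. mangoldt d * chi4 d / real d * (S4 (N div d) - S4 N)\<bar>
        \<le> (\<Sum>d=1..N. \<bar>mangoldt d * chi4 d / real d * (S4 (N div d) - S4 N)\<bar>)"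
    by (rule sum_abs)
  also have "\<dots> \<le> (\<Sum>d=1..N. mangoldt d / real N)"
  proof (rule sum_mono)
    fix d assume d: "d \<in> {1..N}"
    have dN: "N div d \<le> N" by simp
    have h1: "\<bar>S4 (N div d) - S4 N\<bar> \<le> 1 / real (N div d + 1)"
      using S4_diff[OF dN] by (simp add: abs_minus_commute)
    have "real N < real (N div d + 1) * real d"
    proof -
      have "d * (N div d) + N mod d = N" by (rule mult_div_mod_eq)
      moreover have "N mod d < d" using d by simp
      ultimately have "N < d + d * (N div d)" by linarith
      then have "N < (N div d + 1) * d" by (simp add: algebra_simps)
      then show ?thesis by (metis of_nat_less_iff of_nat_mult)
    qed
    then have h2: "1 / real (N div d + 1) \<le> real d / real N"
      using d N1 by (simp add: field_simps)
    have "\<bar>mangoldt d * chi4 d / real d * (S4 (N div d) - S4 N)\<bar>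
          = mangoldt d * \<bar>chi4 d\<bar> / real d * \<bar>S4 (N div d) - S4 N\<bar>"
      by (simp add: abs_mult mangoldt_nonneg)
    also have "\<dots> \<le> mangoldt d * 1 / real d * (real d / real N)"
      using chi4_abs[of d] h1 h2 mangoldt_nonneg[of d]
      by (intro mult_mono divide_right_mono mult_left_mono) auto
    also have "\<dots> = mangoldt d / real N" using d by simp
    finally show "\<bar>mangoldt d * chi4 d / real d * (S4 (N div d) - S4 N)\<bar> \<le> mangoldt d / real N" .
  qed
  also have "\<dots> = psi N / real N" unfolding psi_def by (simp add: sum_divide_distrib)
  also have "\<dots> \<le> 4" using psi_le[of N] N1 by (simp add: field_simps)
  finally have h: "\<bar>S4 N * T\<bar> \<le> 5" using log_chi_sum[of N] unfolding eq by linarith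
  have S: "S4 N \<ge> 2/3" using S4_lower N1 by simp
  have "2/3 * \<bar>T\<bar> \<le> S4 N * \<bar>T\<bar>" using S by (intro mult_right_mono) auto
  also have "\<dots> = \<bar>S4 N * T\<bar>" using S by (simp add: abs_mult)
  finally show ?thesis using h unfolding T_def by linarith
qed

definition G3 :: "nat \<Rightarrow> real" where
  "G3 n = (\<Sum>m=1..n. if prime m \<and> m mod 4 = 3 then ln (real m) / real m else 0)"

lemma G3_nonneg: "G3 n \<ge> 0"
  unfolding G3_def by (intro sum_nonneg) auto

lemma G3_upper:
  assumes "n \<ge> 1"
  shows "G3 n \<le> ln (real n) / 2 + 6"
proof -
  have "G3 n \<le> (\<Sum>m=1..n. (1 - chi4 m) / 2 * (mangoldt m / real m))"
    unfolding G3_def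
  proof (rule sum_mono)
    fix m assume m: "m \<in> {1..n}"
    have c: "0 \<le> 1 - chi4 m" using chi4_abs[of m] by linarith
    have nn: "0 \<le> mangoldt m / real m" by (simp add: mangoldt_nonneg)
    show "(if prime m \<and> m mod 4 = 3 then ln (real m) / real m else 0) \<le> (1 - chi4 m) / 2 * (mangoldt m / real m)"
      using c nn by (auto simp: chi4_def)
  qed
  also have "\<dots> = (\<Sum>m=1..n. (mangoldt m / real m - chi4 m * mangoldt m / real m) / 2)"
    by (intro sum.cong refl) (simp add: field_simps)
  also have "\<dots> = ((\<Sum>m=1..n. mangoldt m / real m) - (\<Sum>m=1..n. chi4 m * mangoldt m / real m)) / 2"
    by (simp add: sum_subtractf sum_divide_distrib[symmetric])
  also have "\<dots> \<le> ((ln (real n) + 4) + 8) / 2"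
    using mertens_upper[OF assms] T_bound[of n] by (intro divide_right_mono) linarith+
  finally show ?thesis by simp
qed

lemma ln_half: "ln (2::real) \<ge> 1/2"
proof -
  have "ln (1/2::real) \<le> 1/2 - 1" by (rule ln_le_minus_one) simp
  then show ?thesis by (simp add: ln_div)
qed

lemma lnln_step:
  assumes "n \<ge> 2"
  shows "ln (real n) * (1 / ln (real n) - 1 / ln (real (Suc n))) \<le> ln (ln (real (Suc n))) - ln (ln (real n))"
proof -
  have v: "ln (real n) > 0" using assms by simp
  have u: "ln (real n) \<le> ln (real (Suc n))" using assms by simp
  then have u0: "ln (real (Suc n)) > 0" using v by linarith
  have "ln (ln (real n) / ln (real (Suc n))) \<le> ln (real n) / ln (real (Suc n)) - 1"
    using u0 v by (intro ln_le_minus_one) simp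
  then have "1 - ln (real n) / ln (real (Suc n)) \<le> ln (ln (real (Suc n))) - ln (ln (real n))"
    using u0 v by (simp add: ln_div)
  moreover have "ln (real n) * (1 / ln (real n) - 1 / ln (real (Suc n))) = 1 - ln (real n) / ln (real (Suc n))"
    using v by (simp only: right_diff_distrib) simp
  ultimately show ?thesis by simp
qed

lemma aux_distr: "((x::real)/2 + 6) * z = (x * z)/2 + 6 * z"
  by (simp add: algebra_simps)

lemma aux2: "(B::real) = A + c * fs \<Longrightarrow> G' = G + c \<Longrightarrow> B - G' * fs = (A - G * fn) + G * (fn - fs)"
  by (simp add: algebra_simps)

lemma aux3:
  fixes x y z p q r u v w :: real
  shows "x = y + z \<Longrightarrow> y \<le> (q - p)/2 + 6*(u - v) \<Longrightarrow> z \<le> (r - q)/2 + 6*(v - w)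
   \<Longrightarrow> x \<le> (r - p)/2 + 6*(u - w)"
  by (simp add: field_simps)

lemma PS_main:
  assumes a: "2 \<le> a" and ab: "a \<le> b"
  shows "(\<Sum>n=a+1..b. (if prime n \<and> n mod 4 = 3 then ln (real n) / real n else 0) * (1 / ln (real n)))
          - G3 b * (1 / ln (real b))
         \<le> (ln (ln (real b)) - ln (ln (real a))) / 2 + 6 * (1 / ln (real a) - 1 / ln (real b))"
  using ab
proof (induction b rule: dec_induct)
  case base
  have "0 \<le> G3 a * (1 / ln (real a))" using G3_nonneg a by simp
  then show ?case by simp
next
  case (step n)
  let ?c = "\<lambda>n. (if prime n \<and> n mod 4 = 3 then ln (real n) / real n else 0)"
  let ?f = "\<lambda>n::nat. 1 / ln (real n)"
  have n2: "n \<ge> 2" using step a by simp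
  have G: "G3 (Suc n) = G3 n + ?c (Suc n)" unfolding G3_def by simp
  have V: "(\<Sum>k=a+1..Suc n. ?c k * ?f k) = (\<Sum>k=a+1..n. ?c k * ?f k) + ?c (Suc n) * ?f (Suc n)"
    using step(1) by simp
  have fd: "0 \<le> ?f n - ?f (Suc n)" using n2
    by (simp add: divide_simps ln_le_cancel_iff)
  have "G3 n * (?f n - ?f (Suc n)) \<le> (ln (real n) / 2 + 6) * (?f n - ?f (Suc n))"
    using G3_upper[of n] n2 fd by (intro mult_right_mono) auto
  also have "\<dots> = (ln (real n) * (?f n - ?f (Suc n))) / 2 + 6 * (?f n - ?f (Suc n))"
    by (rule aux_distr)
  also have "\<dots> \<le> (ln (ln (real (Suc n))) - ln (ln (real n))) / 2 + 6 * (?f n - ?f (Suc n))"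
    using lnln_step[OF n2] by (intro add_right_mono divide_right_mono) auto
  finally have step2: "G3 n * (?f n - ?f (Suc n)) \<le> (ln (ln (real (Suc n))) - ln (ln (real n))) / 2 + 6 * (?f n - ?f (Suc n))" .
  have key: "(\<Sum>k=a+1..Suc n. ?c k * ?f k) - G3 (Suc n) * ?f (Suc n)
        = ((\<Sum>k=a+1..n. ?c k * ?f k) - G3 n * ?f n) + G3 n * (?f n - ?f (Suc n))"
    by (rule aux2[OF V G])
  show ?case by (rule aux3[OF key step(3) step2])
qed

lemma PS_bound:
  assumes a: "2 \<le> a" and ab: "a \<le> b"
  shows "(\<Sum>n=a+1..b. if prime n \<and> n mod 4 = 3 then 1 / real n else 0)
         \<le> (ln (ln (real b)) - ln (ln (real a))) / 2 + 25"
proof -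
  have eq: "(\<Sum>n=a+1..b. if prime n \<and> n mod 4 = 3 then 1 / real n else 0) =
        (\<Sum>n=a+1..b. (if prime n \<and> n mod 4 = 3 then ln (real n) / real n else 0) * (1 / ln (real n)))"
  proof (intro sum.cong refl)
    fix n assume "n \<in> {a+1..b}"
    then have "ln (real n) > 0" using a by simp
    then show "(if prime n \<and> n mod 4 = 3 then 1 / real n else 0) =
        (if prime n \<and> n mod 4 = 3 then ln (real n) / real n else 0) * (1 / ln (real n))" by simp
  qed
  have la: "ln (real a) \<ge> 1/2" using a ln_half
    by (metis (mono_tags, opaque_lifting) le_less_trans less_eq_real_def ln_less_cancel_iff not_le numeral_le_real_of_nat_iff of_nat_0_less_iff zero_less_numeral order.trans)
  have lb: "ln (real b) \<ge> 1/2" using a ab ln_half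
    by (metis (mono_tags, opaque_lifting) le_less_trans less_eq_real_def ln_less_cancel_iff not_le numeral_le_real_of_nat_iff of_nat_0_less_iff zero_less_numeral order.trans)
  have "G3 b * (1 / ln (real b)) \<le> (ln (real b) / 2 + 6) * (1 / ln (real b))"
    using G3_upper[of b] a ab lb by (intro mult_right_mono) auto
  also have "\<dots> = 1/2 + 6 / ln (real b)" using lb by (simp add: field_simps)
  also have "\<dots> \<le> 1/2 + 12" using lb by (simp add: field_simps)
  finally have g: "G3 b * (1 / ln (real b)) \<le> 25/2" by simp
  have fa: "1 / ln (real a) \<le> 2" using la by (simp add: field_simps)
  have fb: "0 \<le> 1 / ln (real b)" using lb by simp
  have "6 * (1 / ln (real a) - 1 / ln (real b)) \<le> 12" using fa fb by (smt (verit))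
  then show ?thesis using PS_main[OF a ab] g unfolding eq by linarith
qed

lemma nu_le: "nuL k a b p \<le> p - 1"
proof -
  have "nuL k a b p \<le> card {1..<p}"
    unfolding nuL_def by (rule card_mono) auto
  then show ?thesis by simp
qed

lemma g_nonneg: "0 \<le> real (nuL k a b p) / (real p - real (nuL k a b p))"
proof (cases "p = 0")
  case True then show ?thesis by (simp add: nuL_def)
next
  case False
  then have "nuL k a b p < p" using nu_le[of k a b p] by simp
  then show ?thesis by simp
qed

lemma one_plus_g:
  assumes "p \<ge> 1"
  shows "1 + real (nuL k a b p) / (real p - real (nuL k a b p)) = real p / (real p - real (nuL k a b p))"
proof -
  have "nuL k a b p < p" using nu_le[of k a b p] assms by simp
  then have "real p - real (nuL k a b p) > 0" by simp
  then show ?thesis by (simp add: field_simps)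
qed

lemma finite_real_less: "finite {p::nat. real p < c}"
proof (rule finite_subset)
  show "{p::nat. real p < c} \<subseteq> {..<nat \<lceil>c\<rceil>}"
    by auto linarith
qed simp

lemma sum_supersets:
  fixes g :: "nat \<Rightarrow> real"
  assumes fin: "finite S" and DS: "D \<subseteq> S"
  shows "(\<Sum>B\<in>{B. B \<subseteq> S \<and> D \<subseteq> B}. \<Prod>p\<in>B. g p) = (\<Prod>p\<in>D. g p) * (\<Prod>p\<in>S-D. 1 + g p)"
proof -
  have finD: "finite D" using fin DS by (rule finite_subset[rotated])
  have "(\<Sum>B\<in>{B. B \<subseteq> S \<and> D \<subseteq> B}. \<Prod>p\<in>B. g p) = (\<Sum>B'\<in>Pow (S-D). \<Prod>p\<in>D \<union> B'. g p)"
  proof (rule sum.reindex_bij_witness[where j="\<lambda>B. B - D" and i="\<lambda>B'. D \<union> B'"], goal_cases)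
    case (1 a) then show ?case by auto
  next
    case (2 a) then show ?case by auto
  next
    case (3 b) then show ?case by auto
  next
    case (4 b) then show ?case using DS by auto
  next
    case (5 a) then show ?case by (simp add: Un_absorb1 Un_Diff_cancel)
  qed
  also have "\<dots> = (\<Sum>B'\<in>Pow (S-D). (\<Prod>p\<in>D. g p) * (\<Prod>p\<in>B'. g p))"
  proof (intro sum.cong refl)
    fix B' assume "B' \<in> Pow (S - D)"
    then have "B' \<subseteq> S - D" by simp
    moreover have "finite B'" using \<open>B' \<subseteq> S - D\<close> fin by (meson finite_Diff finite_subset)
    ultimately show "(\<Prod>p\<in>D \<union> B'. g p) = (\<Prod>p\<in>D. g p) * (\<Prod>p\<in>B'. g p)"
      using finD by (intro prod.union_disjoint) auto
  qed
  also have "\<dots> = (\<Prod>p\<in>D. g p) * (\<Sum>B'\<in>Pow (S-D). \<Prod>p\<in>B'. g p)"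
    by (simp add: sum_distrib_left)
  also have "(\<Sum>B'\<in>Pow (S-D). \<Prod>p\<in>B'. g p) = (\<Prod>p\<in>S-D. g p + 1)"
    using prod_add[of "S-D" g "\<lambda>_. 1"] fin by simp
  finally show ?thesis by (simp add: add.commute)
qed

lemma moeb_abs: "\<bar>real_of_int (moeb d)\<bar> \<le> 1"
  unfolding moeb_def by (auto simp: abs_mult power_abs)

lemma squarefree_prod_pf:
  assumes "squarefree (r::nat)" "r > 0"
  shows "\<Prod>(prime_factors r) = r"
proof -
  have "(\<Prod>p\<in>prime_factors r. p ^ multiplicity p r) = r"
    using prod_prime_factors[of r] assms by simp
  moreover have "\<And>p. p \<in> prime_factors r \<Longrightarrow> multiplicity p r = 1"
    using assms squarefree_factorial_semiring'[of r] by auto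
  ultimately show ?thesis by simp
qed

lemma lambda_bound:
  fixes X :: real and p0 k :: nat and a b :: "nat \<Rightarrow> int" and d :: nat
  defines "S \<equiv> {p. prime p \<and> p mod 4 = 3 \<and> coprime p (Wprod X p0 * p0) \<and> real p < X powr (1/10)}"
  shows "\<bar>lambdaL X p0 k a b d\<bar> \<le> (\<Prod>p\<in>S. real p / (real p - real (nuL k a b p)))"
proof -
  let ?nu = "nuL k a b"
  define g where "g = (\<lambda>p. real (?nu p) / (real p - real (?nu p)))"
  have g0: "\<And>p. g p \<ge> 0" unfolding g_def by (rule g_nonneg)
  have finS: "finite S" unfolding S_def by (rule finite_subset[OF _ finite_real_less]) auto
  have Sprime: "\<And>p. p \<in> S \<Longrightarrow> prime p" unfolding S_def by auto
  have Spos: "\<And>p. p \<in> S \<Longrightarrow> p \<ge> 1" using Sprime prime_ge_1_nat by blast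
  have RHS: "(\<Prod>p\<in>S. real p / (real p - real (?nu p))) = (\<Prod>p\<in>S. 1 + g p)"
    unfolding g_def using Spos by (intro prod.cong refl) (simp add: one_plus_g)
  have RHS0: "(\<Prod>p\<in>S. 1 + g p) \<ge> 0" using g0 by (intro prod_nonneg) (auto intro: add_nonneg_nonneg)
  show ?thesis
  proof (cases "coprime d (p0 * Wprod X p0)")
    case False
    then have "lambdaL X p0 k a b d = 0" unfolding lambdaL_def by (rule if_not_P)
    then show ?thesis unfolding RHS using RHS0 by simp
  next
    case True
    define D where "D = prime_factors d"
    define R where "R = {r::nat. 0 < r \<and> d dvd r \<and> real r < X powr (1/10)}"
    define R' where "R' = {r\<in>R. r \<in> P3 \<and> squarefree r \<and> coprime r (Wprod X p0 * p0)}"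
    have finR: "finite R" unfolding R_def by (rule finite_subset[OF _ finite_real_less]) auto
    have finR': "finite R'" unfolding R'_def using finR by simp
    define Sig where "Sig = (\<Sum>r\<in>R. yr X p0 r * (\<Prod>p\<in>prime_factors r. g p))"
    have lam: "lambdaL X p0 k a b d = real_of_int (moeb d) * (\<Prod>p\<in>D. real p / real (?nu p)) * Sig"
      unfolding lambdaL_def Sig_def R_def D_def g_def using True by simp
    have Sig_eq: "Sig = (\<Sum>r\<in>R'. \<Prod>p\<in>prime_factors r. g p)"
    proof -
      have "Sig = (\<Sum>r\<in>R. if r \<in> P3 \<and> squarefree r \<and> coprime r (Wprod X p0 * p0) then (\<Prod>p\<in>prime_factors r. g p) else 0)"
        unfolding Sig_def by (intro sum.cong refl) (auto simp: yr_def R_def)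
      also have "\<dots> = (\<Sum>r\<in>R'. \<Prod>p\<in>prime_factors r. g p)"
        unfolding R'_def using finR by (simp add: sum.inter_filter)
      finally show ?thesis .
    qed
    have inj: "inj_on prime_factors R'"
    proof (rule inj_onI)
      fix r s assume r: "r \<in> R'" and s: "s \<in> R'" and e: "prime_factors r = prime_factors s"
      have "r = \<Prod>(prime_factors r)" using r squarefree_prod_pf[of r] by (auto simp: R'_def R_def)
      also have "\<dots> = \<Prod>(prime_factors s)" using e by simp
      also have "\<dots> = s" using s squarefree_prod_pf[of s] by (auto simp: R'_def R_def)
      finally show "r = s" .
    qed
    have Sig_eq2: "Sig = (\<Sum>B\<in>prime_factors ` R'. \<Prod>p\<in>B. g p)"
      unfolding Sig_eq using inj by (simp add: sum.reindex)
    have img: "prime_factors ` R' \<subseteq> {B. B \<subseteq> S \<and> D \<subseteq> B}"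
    proof
      fix B assume "B \<in> prime_factors ` R'"
      then obtain r where r: "r \<in> R'" "B = prime_factors r" by auto
      have r0: "r \<noteq> 0" and dr: "d dvd r" and rX: "real r < X powr (1/10)" and rP: "r \<in> P3"
        and rc: "coprime r (Wprod X p0 * p0)"
        using r by (auto simp: R'_def R_def)
      have "B \<subseteq> S"
      proof
        fix p assume p: "p \<in> B"
        then have pp: "prime p" and pd: "p dvd r" using r by auto
        have "p mod 4 = 3" using rP p r unfolding P3_def by auto
        moreover have "coprime p (Wprod X p0 * p0)" using coprime_divisors[OF pd dvd_refl rc] .
        moreover have "p \<le> r" using pd r0 by (simp add: dvd_imp_le)
        then have "real p < X powr (1/10)" using rX by linarith
        ultimately show "p \<in> S" unfolding S_def using pp by auto
      qed
      moreover have "D \<subseteq> B" unfolding D_def r(2) using dr r0 by (rule dvd_prime_factors[rotated])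
      ultimately show "B \<in> {B. B \<subseteq> S \<and> D \<subseteq> B}" by simp
    qed
    have finBS: "finite {B. B \<subseteq> S \<and> D \<subseteq> B}"
      by (rule finite_subset[of _ "Pow S"]) (auto simp: finS)
    have Sig_le: "Sig \<le> (\<Sum>B\<in>{B. B \<subseteq> S \<and> D \<subseteq> B}. \<Prod>p\<in>B. g p)"
      unfolding Sig_eq2 using img finBS g0 by (intro sum_mono2) (auto intro: prod_nonneg)
    have Sig0: "Sig \<ge> 0" unfolding Sig_eq2 using g0 by (intro sum_nonneg prod_nonneg) auto
    have PD0: "(\<Prod>p\<in>D. real p / real (?nu p)) \<ge> 0" by (intro prod_nonneg) auto
    have abs_lam: "\<bar>lambdaL X p0 k a b d\<bar> \<le> (\<Prod>p\<in>D. real p / real (?nu p)) * Sig"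
    proof -
      have "\<bar>lambdaL X p0 k a b d\<bar> = \<bar>real_of_int (moeb d)\<bar> * ((\<Prod>p\<in>D. real p / real (?nu p)) * Sig)"
        unfolding lam using PD0 Sig0 by (simp add: abs_mult)
      also have "\<dots> \<le> 1 * ((\<Prod>p\<in>D. real p / real (?nu p)) * Sig)"
        using moeb_abs[of d] PD0 Sig0 by (intro mult_right_mono) auto
      finally show ?thesis by simp
    qed
    show ?thesis
    proof (cases "D \<subseteq> S")
      case False
      then have e: "{B. B \<subseteq> S \<and> D \<subseteq> B} = {}" by auto
      have "Sig \<le> 0" using Sig_le unfolding e by simp
      then have "Sig = 0" using Sig0 by simp
      then show ?thesis using abs_lam RHS RHS0 by simp
    next
      case DS: True
      have "\<bar>lambdaL X p0 k a b d\<bar> \<le> (\<Prod>p\<in>D. real p / real (?nu p)) * ((\<Prod>p\<in>D. g p) * (\<Prod>p\<in>S-D. 1 + g p))"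
        using abs_lam Sig_le sum_supersets[OF finS DS, of g] PD0
        by (metis (no_types, lifting) mult_left_mono order_trans)
      also have "\<dots> = (\<Prod>p\<in>D. real p / real (?nu p) * g p) * (\<Prod>p\<in>S-D. 1 + g p)"
        by (simp only: prod.distrib mult.assoc)
      also have "\<dots> \<le> (\<Prod>p\<in>D. 1 + g p) * (\<Prod>p\<in>S-D. 1 + g p)"
      proof (rule mult_right_mono)
        show "(\<Prod>p\<in>D. real p / real (?nu p) * g p) \<le> (\<Prod>p\<in>D. 1 + g p)"
        proof (rule prod_mono, rule conjI)
          fix p assume "p \<in> D"
          then have p1: "p \<ge> 1" using DS Spos by auto
          show "0 \<le> real p / real (?nu p) * g p" using g0[of p] by simp
          show "real p / real (?nu p) * g p \<le> 1 + g p"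
          proof (cases "?nu p = 0")
            case True then show ?thesis using g0[of p] by simp
          next
            case False
            have "?nu p < p" using nu_le[of k a b p] p1 by simp
            then have "real p / real (?nu p) * g p = real p / (real p - real (?nu p))"
              unfolding g_def using False by (simp add: field_simps)
            also have "\<dots> = 1 + g p" unfolding g_def using one_plus_g[OF p1] by simp
            finally show ?thesis by simp
          qed
        qed
        show "0 \<le> (\<Prod>p\<in>S-D. 1 + g p)" using g0 by (intro prod_nonneg) (auto intro: add_nonneg_nonneg)
      qed
      also have "\<dots> = (\<Prod>p\<in>S. 1 + g p)"
        using prod.subset_diff[OF DS finS, of "\<lambda>p. 1 + g p"] by (simp add: mult.commute)
      finally show ?thesis using RHS by simp
    qed
  qed
qed

lemma nu_le_k:
  assumes p: "prime p" and nd: "\<forall>i<k. \<not> int p dvd a i"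
  shows "nuL k a b p \<le> k"
proof -
  define Ai where "Ai = (\<lambda>i. {n::nat. n < p \<and> int p dvd a i * int n + b i})"
  have pint: "prime (int p)" using p by simp
  have sub: "{n::nat. 1 \<le> n \<and> n < p \<and> int p dvd prodL k a b (int n)} \<subseteq> (\<Union>i\<in>{..<k}. Ai i)"
  proof
    fix n assume "n \<in> {n::nat. 1 \<le> n \<and> n < p \<and> int p dvd prodL k a b (int n)}"
    then have n: "n < p" "int p dvd (\<Prod>i<k. a i * int n + b i)" by (auto simp: prodL_def)
    then obtain i where "i \<in> {..<k}" "int p dvd a i * int n + b i"
      using prime_dvd_prod_iff[OF _ pint, of "{..<k}"] by auto
    then show "n \<in> (\<Union>i\<in>{..<k}. Ai i)" using n by (auto simp: Ai_def)
  qed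
  have finU: "finite (\<Union>i\<in>{..<k}. Ai i)"
    by (rule finite_subset[of _ "{..<p}"]) (auto simp: Ai_def)
  have card1: "card (Ai i) \<le> 1" if i: "i < k" for i
  proof -
    have fin: "finite (Ai i)" by (rule finite_subset[of _ "{..<p}"]) (auto simp: Ai_def)
    have "\<forall>n\<in>Ai i. \<forall>m\<in>Ai i. n = m"
    proof (intro ballI)
      fix n m assume n: "n \<in> Ai i" and m: "m \<in> Ai i"
      have "int p dvd (a i * int n + b i) - (a i * int m + b i)"
        using n m unfolding Ai_def by (intro dvd_diff) auto
      then have "int p dvd a i * (int n - int m)" by (simp add: algebra_simps)
      then have "int p dvd int n - int m" using nd i pint prime_dvd_mult_iff by metis
      then have "int n mod int p = int m mod int p" by (simp add: mod_eq_dvd_iff)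
      moreover have "int n mod int p = int n" "int m mod int p = int m"
        using n m by (auto simp: Ai_def)
      ultimately show "n = m" by simp
    qed
    then show ?thesis using card_le_Suc0_iff_eq[OF fin] by simp
  qed
  have "nuL k a b p \<le> card (\<Union>i\<in>{..<k}. Ai i)"
    unfolding nuL_def by (rule card_mono[OF finU sub])
  also have "\<dots> \<le> (\<Sum>i\<in>{..<k}. card (Ai i))" by (rule card_UN_le) simp
  also have "\<dots> \<le> (\<Sum>i\<in>{..<k}. 1)" by (rule sum_mono) (metis card1 lessThan_iff)
  finally show ?thesis by simp
qed

lemma factor_bound:
  fixes p k :: real
  assumes "0 < p" "0 \<le> k" "2*k \<le> p"
  shows "p/(p-k) \<le> exp (k/p + 2*k^2/p^2)"
proof -
  have pk: "p - k > 0" using assms by simp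
  have e1: "p/(p-k) = 1 + k/(p-k)" using pk by (simp add: field_simps)
  have e2: "k/p + 2*k^2/p^2 - k/(p-k) = k^2*(p - 2*k)/(p^2*(p-k))"
    using pk assms(1) by (simp add: field_simps power2_eq_square)
  have "0 \<le> k^2*(p - 2*k)/(p^2*(p-k))" using assms pk by (intro divide_nonneg_nonneg mult_nonneg_nonneg) auto
  then have le: "k/(p-k) \<le> k/p + 2*k^2/p^2" using e2 by simp
  have "p/(p-k) \<le> exp (k/(p-k))" unfolding e1 by (rule exp_ge_add_one_self)
  also have "\<dots> \<le> exp (k/p + 2*k^2/p^2)" using le by simp
  finally show ?thesis .
qed

lemma inv_sq_sum_aux:
  assumes "1 \<le> A" "A \<le> M"
  shows "(\<Sum>n=A+1..M. 1 / real n ^ 2) \<le> 1 / real A - 1 / real M"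
  using assms(2)
proof (induction M rule: dec_induct)
  case base then show ?case by simp
next
  case (step m)
  have m1: "real m \<ge> 1" using step(1) assms(1) by simp
  have e: "1 / real m - 1 / real (Suc m) = 1 / (real m * (real m + 1))" using m1 by (simp add: field_simps)
  have le: "real m * (real m + 1) \<le> real (Suc m)^2" by (simp add: power2_eq_square algebra_simps)
  have "1 / real (Suc m) ^ 2 \<le> 1 / (real m * (real m + 1))"
    using m1 le by (intro divide_left_mono) auto
  then have "1 / real (Suc m) ^ 2 \<le> 1 / real m - 1 / real (Suc m)" using e by simp
  then show ?case using step by simp
qed

lemma inv_sq_sum:
  assumes "1 \<le> A"
  shows "(\<Sum>n=A+1..M. 1 / real n ^ 2) \<le> 1 / real A"
proof (cases "A \<le> M")
  case True
  then show ?thesis using inv_sq_sum_aux[OF assms True] assms by (smt (verit) divide_nonneg_nonneg of_nat_0_le_iff)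
next
  case False then show ?thesis using assms by simp
qed

lemma exp_ge_2: "exp (1::real) \<ge> 2"
  using exp_ge_add_one_self[of 1] by simp

lemma ln_ge_of_exp: "x \<ge> exp e \<Longrightarrow> ln x \<ge> (e::real)"
proof -
  assume "x \<ge> exp e"
  moreover have "exp e > 0" by simp
  ultimately have x0: "x > 0" by linarith
  have "ln (exp e) \<le> ln x" using x0 \<open>x \<ge> exp e\<close> by (subst ln_le_cancel_iff) auto
  then show ?thesis by simp
qed

lemma powr_ge_2:
  fixes L c :: real
  assumes "L > 0" "c * ln L \<ge> 1"
  shows "L powr c \<ge> 2"
proof -
  have "L powr c = exp (c * ln L)" using assms by (simp add: powr_def)
  also have "\<dots> \<ge> exp 1" using assms by simp
  finally show ?thesis using exp_ge_2 by linarith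
qed

lemma core:
  fixes X :: real and k p0 :: nat and a b :: "nat \<Rightarrow> int" and d :: nat
  assumes X: "X \<ge> exp (exp (exp 60))"
    and k: "real k \<le> ln X powr (1/5)"
    and p0: "prime p0"
    and ai: "\<forall>i<k. 0 < a i \<and> real_of_int (a i) \<le> ln X powr (1/3)"
  shows "\<bar>lambdaL X p0 k a b d\<bar> \<le> ln X powr (real k / 2)"
proof -
  define L where "L = ln X"
  have e60: "exp (60::real) \<ge> 61" using exp_ge_add_one_self[of 60] by simp
  have L1: "L \<ge> exp (exp 60)" unfolding L_def using X by (rule ln_ge_of_exp)
  have Lpos: "L > 0" using L1 by (smt (verit) exp_gt_zero)
  have lnL: "ln L \<ge> exp 60" using L1 by (rule ln_ge_of_exp)
  have lnL61: "ln L \<ge> 61" using lnL e60 by linarith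
  have Xpos: "X > 0" using X by (smt (verit) exp_gt_zero)
  define y where "y = 2 * L powr (1/3)"
  define A where "A = nat \<lfloor>y\<rfloor>"
  define Bn where "Bn = nat \<lfloor>X powr (1/10)\<rfloor>"
  define S where "S = {p. prime p \<and> p mod 4 = 3 \<and> coprime p (Wprod X p0 * p0) \<and> real p < X powr (1/10)}"
  have L13_2: "L powr (1/3) \<ge> 2" using Lpos lnL61 by (intro powr_ge_2) auto
  have L215: "L powr (2/15) \<ge> 2" using Lpos lnL61 by (intro powr_ge_2) auto
  have L15: "L powr (1/5) \<ge> 0" by simp
  have P13: "L powr (1/3) \<ge> 2 * L powr (1/5)"
  proof -
    have "L powr (1/3) = L powr (1/5) * L powr (2/15)"
      by (simp add: powr_add[symmetric])
    also have "\<dots> \<ge> L powr (1/5) * 2" using L215 L15 by (intro mult_left_mono) auto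
    finally show ?thesis by simp
  qed
  have kL: "2 * real k \<le> L powr (1/3)" using k P13 unfolding L_def by linarith
  have y0: "y \<ge> 0" unfolding y_def by simp
  have A_ge: "real A \<ge> L powr (1/3)"
  proof -
    have "real A = real_of_int \<lfloor>y\<rfloor>" unfolding A_def using y0 by simp
    also have "\<dots> \<ge> y - 1" by linarith
    finally show ?thesis unfolding y_def using L13_2 by linarith
  qed
  have A2: "A \<ge> 2" using A_ge L13_2 by linarith
  have kA: "2 * real k \<le> real A" using A_ge kL by linarith
  have lnA: "ln (real A) \<ge> ln L / 3"
  proof -
    have "L powr (1/3) > 0" using Lpos by simp
    then have "ln (L powr (1/3)) \<le> ln (real A)" using A_ge A2 by (subst ln_le_cancel_iff) auto
    then show ?thesis using Lpos by simp
  qed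
  have lnlnA: "ln (ln (real A)) \<ge> 58"
  proof -
    have "ln L / 3 \<ge> exp 58"
    proof -
      have "exp (60::real) = exp 58 * exp 2" by (simp add: exp_add[symmetric])
      moreover have "exp (2::real) \<ge> 3" using exp_ge_add_one_self[of 2] by simp
      moreover have "exp 58 * 3 \<le> exp 58 * exp (2::real)" using \<open>exp (2::real) \<ge> 3\<close> by (intro mult_left_mono) auto
      ultimately have "exp (60::real) \<ge> exp 58 * 3" by linarith
      then show ?thesis using lnL by simp
    qed
    then have "ln (real A) \<ge> exp 58" using lnA by linarith
    then show ?thesis by (rule ln_ge_of_exp)
  qed
  have Sprime: "\<And>p. p \<in> S \<Longrightarrow> prime p" unfolding S_def by auto
  have Sgt: "real p > y" if pS: "p \<in> S" for p
  proof (rule ccontr)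
    assume "\<not> real p > y"
    then have py: "real p \<le> 2 * ln X powr (1/3)" unfolding y_def L_def by simp
    have pp: "prime p" and p3: "p mod 4 = 3" and pc: "coprime p (Wprod X p0 * p0)"
      using pS unfolding S_def by auto
    have "p \<noteq> p0"
    proof
      assume "p = p0"
      then have "p dvd Wprod X p0 * p0" by simp
      then have "is_unit p" by (rule coprime_common_divisor[OF pc dvd_refl])
      then show False using pp by simp
    qed
    define W where "W = {p::nat. prime p \<and> real p \<le> 2 * ln X powr (1/3) \<and> p mod 4 = 3 \<and> p \<noteq> p0}"
    have finW: "finite W" unfolding W_def
      by (rule finite_subset[OF _ finite_real_less[of "2 * ln X powr (1/3) + 1"]]) auto
    have "p \<in> W" unfolding W_def using pp py p3 \<open>p \<noteq> p0\<close> by simp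
    then have "(\<lambda>p. p) p dvd (\<Prod>p\<in>W. p)" by (rule dvd_prodI[OF finW])
    then have "p dvd Wprod X p0" unfolding Wprod_def W_def by simp
    then have "p dvd Wprod X p0 * p0" by simp
    then have "is_unit p" by (rule coprime_common_divisor[OF pc dvd_refl])
    then show False using pp by simp
  qed
  have SA: "A < p" if "p \<in> S" for p
  proof -
    have "real_of_int \<lfloor>y\<rfloor> < real p" using Sgt[OF that] by linarith
    then have h: "\<lfloor>y\<rfloor> < int p" by (metis of_int_less_iff of_int_of_nat_eq)
    have "0 \<le> \<lfloor>y\<rfloor>" using y0 by simp
    then show ?thesis unfolding A_def using h by (simp add: nat_less_iff)
  qed
  have SB: "p \<le> Bn" if "p \<in> S" for p
  proof -
    have "real p < X powr (1/10)" using that unfolding S_def by simp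
    then have "int p \<le> \<lfloor>X powr (1/10)\<rfloor>" by linarith
    then show ?thesis unfolding Bn_def by linarith
  qed
  have Sk: "2 * real k < real p" if "p \<in> S" for p
  proof -
    have "L powr (1/3) < y" unfolding y_def using L13_2 by linarith
    then show ?thesis using Sgt[OF that] kL by linarith
  qed
  have Snu: "nuL k a b p \<le> k" if pS: "p \<in> S" for p
  proof (rule nu_le_k[OF Sprime[OF pS]], intro allI impI notI)
    fix i assume i: "i < k" and dv: "int p dvd a i"
    have ai0: "0 < a i" and aiL: "real_of_int (a i) \<le> L powr (1/3)" using ai i unfolding L_def by auto
    have "int p \<le> a i" using zdvd_imp_le[OF dv ai0] .
    then have "real p \<le> L powr (1/3)" using aiL by linarith
    moreover have "L powr (1/3) < y" unfolding y_def using L13_2 by linarith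
    ultimately show False using Sgt[OF pS] by linarith
  qed
  have finS: "finite S" unfolding S_def by (rule finite_subset[OF _ finite_real_less]) auto
  have step1: "\<bar>lambdaL X p0 k a b d\<bar> \<le> (\<Prod>p\<in>S. real p / (real p - real (nuL k a b p)))"
    unfolding S_def by (rule lambda_bound)
  also have "\<dots> \<le> (\<Prod>p\<in>S. real p / (real p - real k))"
  proof (rule prod_mono, rule conjI)
    fix p assume pS: "p \<in> S"
    have "real (nuL k a b p) \<le> real k" using Snu[OF pS] by simp
    moreover have "real p - real k > 0" using Sk[OF pS] by linarith
    ultimately show "real p / (real p - real (nuL k a b p)) \<le> real p / (real p - real k)"
      by (intro divide_left_mono) auto
    show "0 \<le> real p / (real p - real (nuL k a b p))"
      using \<open>real p - real k > 0\<close> \<open>real (nuL k a b p) \<le> real k\<close> by simp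
  qed
  also have "\<dots> \<le> (\<Prod>p\<in>S. exp (real k / real p + 2 * real k ^ 2 / real p ^ 2))"
  proof (rule prod_mono, rule conjI)
    fix p assume pS: "p \<in> S"
    have "real p - real k > 0" using Sk[OF pS] by linarith
    then show "0 \<le> real p / (real p - real k)" by simp
    show "real p / (real p - real k) \<le> exp (real k / real p + 2 * real k ^ 2 / real p ^ 2)"
      using Sk[OF pS] by (intro factor_bound) auto
  qed
  also have "\<dots> = exp (\<Sum>p\<in>S. real k / real p + 2 * real k ^ 2 / real p ^ 2)"
    using finS by (simp add: exp_sum)
  finally have chain: "\<bar>lambdaL X p0 k a b d\<bar> \<le> exp (\<Sum>p\<in>S. real k / real p + 2 * real k ^ 2 / real p ^ 2)" .
  show ?thesis
  proof (cases "S = {}")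
    case True
    then have "\<bar>lambdaL X p0 k a b d\<bar> \<le> 1" using chain by simp
    moreover have "1 \<le> ln X powr (real k / 2)" using L1 unfolding L_def
      by (intro ge_one_powr_ge_zero) (auto intro: order.trans[OF _ L1[unfolded L_def]] simp: )
    ultimately show ?thesis by linarith
  next
    case False
    then obtain q where qS: "q \<in> S" by auto
    have AB: "A \<le> Bn" using SA[OF qS] SB[OF qS] by simp
    have SsubAB: "S \<subseteq> {A+1..Bn}" using SA SB by (auto simp: Suc_le_eq)
    have sum1: "(\<Sum>p\<in>S. 1 / real p) \<le> (ln (ln (real Bn)) - ln (ln (real A))) / 2 + 25"
    proof -
      have "(\<Sum>p\<in>S. 1 / real p) = (\<Sum>p\<in>S. if prime p \<and> p mod 4 = 3 then 1 / real p else 0)"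
        by (intro sum.cong refl) (auto simp: S_def)
      also have "\<dots> \<le> (\<Sum>n=A+1..Bn. if prime n \<and> n mod 4 = 3 then 1 / real n else 0)"
        using SsubAB by (intro sum_mono2) auto
      also have "\<dots> \<le> (ln (ln (real Bn)) - ln (ln (real A))) / 2 + 25"
        by (rule PS_bound[OF A2 AB])
      finally show ?thesis .
    qed
    have sum2: "(\<Sum>p\<in>S. 1 / real p ^ 2) \<le> 1 / real A"
    proof -
      have "(\<Sum>p\<in>S. 1 / real p ^ 2) \<le> (\<Sum>n=A+1..Bn. 1 / real n ^ 2)"
        using SsubAB by (intro sum_mono2) auto
      also have "\<dots> \<le> 1 / real A" using A2 by (intro inv_sq_sum) simp
      finally show ?thesis .
    qed
    have Bn2: "Bn \<ge> 2" using AB A2 by simp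
    have lnlnB: "ln (ln (real Bn)) \<le> ln L"
    proof -
      have "real Bn \<le> X powr (1/10)" unfolding Bn_def
        using Xpos by (simp add: of_nat_nat)
      then have "ln (real Bn) \<le> ln (X powr (1/10))" using Bn2 by (subst ln_le_cancel_iff) auto
      also have "\<dots> = L / 10" unfolding L_def by simp
      also have "\<dots> \<le> L" using Lpos by simp
      finally have "ln (real Bn) \<le> L" .
      moreover have "ln (real Bn) > 0" using Bn2 by simp
      ultimately show ?thesis by (subst ln_le_cancel_iff) auto
    qed
    have "(\<Sum>p\<in>S. real k / real p + 2 * real k ^ 2 / real p ^ 2)
          = real k * (\<Sum>p\<in>S. 1 / real p) + 2 * real k ^ 2 * (\<Sum>p\<in>S. 1 / real p ^ 2)"
      by (simp add: sum.distrib sum_distrib_left)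
    also have "\<dots> \<le> real k * ((ln L - 58) / 2 + 25) + 2 * real k ^ 2 * (1 / real A)"
    proof (rule add_mono)
      have "(\<Sum>p\<in>S. 1 / real p) \<le> (ln L - 58) / 2 + 25"
        using sum1 lnlnB lnlnA by (simp add: field_simps)
      then show "real k * (\<Sum>p\<in>S. 1 / real p) \<le> real k * ((ln L - 58) / 2 + 25)"
        by (intro mult_left_mono) auto
      show "2 * real k ^ 2 * (\<Sum>p\<in>S. 1 / real p ^ 2) \<le> 2 * real k ^ 2 * (1 / real A)"
        using sum2 by (intro mult_left_mono) auto
    qed
    also have "\<dots> \<le> real k * ((ln L - 58) / 2 + 25) + real k"
    proof -
      have "2 * real k ^ 2 * (1 / real A) = real k * (2 * real k / real A)"
        by (simp add: power2_eq_square)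
      also have "\<dots> \<le> real k * 1"
        using kA A2 by (intro mult_left_mono) (auto simp: field_simps)
      finally show ?thesis by simp
    qed
    also have "\<dots> \<le> real k / 2 * ln L" by (simp add: field_simps)
    finally have "(\<Sum>p\<in>S. real k / real p + 2 * real k ^ 2 / real p ^ 2) \<le> real k / 2 * ln L" .
    then have "exp (\<Sum>p\<in>S. real k / real p + 2 * real k ^ 2 / real p ^ 2) \<le> exp (real k / 2 * ln L)"
      by simp
    also have "\<dots> = L powr (real k / 2)" using Lpos by (simp add: powr_def)
    finally show ?thesis using chain unfolding L_def by simp
  qed
qed

theorem lemma9:
  "\<exists>C::real. \<exists>X0::real. \<forall>X\<ge>X0. \<forall>(k::nat) (p0::nat) (a::nat \<Rightarrow> int) (b::nat \<Rightarrow> int)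
      (c0::real) (Ceps::real \<Rightarrow> real).
     real k \<le> ln X powr (1/5) \<longrightarrow>
     prime p0 \<longrightarrow> ln (ln X) / 2 \<le> real p0 \<longrightarrow> real p0 \<le> X \<longrightarrow>
     c0 > 0 \<longrightarrow>
     (\<forall>\<epsilon>>0. (\<Sum>q\<in>{q::nat. 0 < q \<and> real q < X powr (1/2 - \<epsilon>) \<and> coprime q p0}.
            (SUP (a', x') \<in> {(a'::nat, x'::real). coprime a' q \<and> x' \<le> X}.
               \<bar>real (prime_pi_ap x' q a') - real (prime_pi x') / real (totient q)\<bar>))
          \<le> Ceps \<epsilon> * X * exp (- c0 * sqrt (ln X))) \<longrightarrow>
     (\<forall>i<k. \<forall>j<k. i \<noteq> j \<longrightarrow> (a i, b i) \<noteq> (a j, b j)) \<longrightarrow>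
     (\<forall>i<k. 0 < a i \<and> real_of_int (a i) \<le> ln X powr (1/3) \<and> coprime (2 * int p0) (a i)
            \<and> 0 < b i \<and> real_of_int (b i) < X) \<longrightarrow>
     (\<forall>p::nat. prime p \<longrightarrow> p mod 4 = 3 \<longrightarrow> (\<exists>n::int. \<not> int p dvd prodL k a b n)) \<longrightarrow>
     (\<forall>d::nat. \<bar>lambdaL X p0 k a b d\<bar> \<le> C * ln X powr (real k / 2))"
proof (rule exI[where x=1], rule exI[where x="exp (exp (exp 60))"], intro allI impI, goal_cases)
  case (1 X k p0 a b c0 Ceps d)
  have ai: "\<forall>i<k. 0 < a i \<and> real_of_int (a i) \<le> ln X powr (1/3)" using 1(9) by blast
  show ?case using core[OF 1(1) 1(2) 1(3) ai, of b d] by simp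
qed

end
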